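(* Assume the standing assumptions and fix a function $h$ satisfying (h1)–(h4). Let $\sigma$ be a stopping time (with respect to an admissible filtration) with $\mathbf E\sigma<\infty$. Then $$\lim_{x\to\infty}\delta_\sigma(x)=0\quad\text{if and only if}\quad \lim_{x\to\infty}\frac{\mathbf P(M_\sigma>x)}{\overline F(x)}=\mathbf E\sigma.$$
   Context: Standing assumptions: $\{\xi_n\}_{n\ge1}$ are i.i.d. real random variables with common distribution function $F$ and finite mean $\mathbf E\xi_1=-m<0$. $F$ is long-tailed: $\overline F(x)=1-F(x)>0$ for all $x$, and $\overline F(x-c)/\overline F(x)\to1$ as $x\to\infty$ for every fixed $c>0$. Notation: $S_0=0$ and $S_n=\sum_{i=1}^n\xi_i$; $M_\sigma=\max_{0\le i\le\sigma}S_i$. Admissible filtration: stopping times are taken with respect to a filtration $\{\mathcal F_n\}_{n\ge0}$ such that $\xi_n$ is $\mathcal F_n$-measurable and $\xi_{n+1}$ is independent of $\mathcal F_n$. The function $h:\mathbb R_+\to\mathbb R_+$ satisfies: - (h1) $h(x)\le x/2$; - (h2) $h(x)\to\infty$; - (h3) $\overline F(x-h(x))/\overline F(x)\to1$ as $x\to\infty$; - (h4) there exists $x_0$ with $h(x+t)\le h(x)+t$ for all $x\ge x_0$, $t\ge0$. For $x\ge0$, let $\mu(x)=\min\{n:S_n>x\}$, with $\min\emptyset=\infty$. For a stopping time $\sigma$, define $$A_{\sigma,2}(x)=\{\mu(x)\le\sigma,\ S_{\mu(x)-1}>h(x)\},\qquad \delta_\sigma(x)=\sup_{y\ge x}\frac{\mathbf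 P(A_{\sigma,2}(y))}{\overline F(y)}.$$ *)

theory Defs
  imports "HOL-Probability.Probability"
begin

definition S :: "(nat \<Rightarrow> 'a \<Rightarrow> real) \<Rightarrow> nat \<Rightarrow> 'a \<Rightarrow> real" where
  "S \<xi> n \<omega> = (\<Sum>i\<in>{1..n}. \<xi> i \<omega>)"

definition Fbar :: "'a measure \<Rightarrow> (nat \<Rightarrow> 'a \<Rightarrow> real) \<Rightarrow> real \<Rightarrow> real" where
  "Fbar M \<xi> x = 1 - cdf (distr M borel (\<xi> 1)) x"

definition Msig :: "(nat \<Rightarrow> 'a \<Rightarrow> real) \<Rightarrow> ('a \<Rightarrow> enat) \<Rightarrow> 'a \<Rightarrow> ereal" where
  "Msig \<xi> \<sigma> \<omega> = (SUP i\<in>{i. enat i \<le> \<sigma> \<omega>}. ereal (S \<xi> i \<omega>))"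

definition mu :: "(nat \<Rightarrow> 'a \<Rightarrow> real) \<Rightarrow> real \<Rightarrow> 'a \<Rightarrow> enat" where
  "mu \<xi> x \<omega> = (if \<exists>n. S \<xi> n \<omega> > x then enat (LEAST n. S \<xi> n \<omega> > x) else \<infinity>)"

definition A2 :: "'a measure \<Rightarrow> (nat \<Rightarrow> 'a \<Rightarrow> real) \<Rightarrow> (real \<Rightarrow> real) \<Rightarrow> ('a \<Rightarrow> enat) \<Rightarrow> real \<Rightarrow> 'a set" where
  "A2 M \<xi> h \<sigma> x = {\<omega>\<in>space M. \<exists>n. mu \<xi> x \<omega> = enat n \<and> enat n \<le> \<sigma> \<omega> \<and> S \<xi> (n - 1) \<omega> > h x}"

definition delta :: "'a measure \<Rightarrow> (nat \<Rightarrow> 'a \<Rightarrow> real) \<Rightarrow> (real \<Rightarrow> real) \<Rightarrow> ('a \<Rightarrow> enat) \<Rightarrow> real \<Rightarrow> ereal" where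
  "delta M \<xi> h \<sigma> x = (SUP y\<in>{x..}. ereal (measure M (A2 M \<xi> h \<sigma> y) / Fbar M \<xi> y))"

end

theory Submission imports Defs begin


lemma S_0[simp]: "S \<xi> 0 \<omega> = 0" by (simp add: S_def)

lemma S_Suc: "S \<xi> (Suc n) \<omega> = S \<xi> n \<omega> + \<xi> (Suc n) \<omega>"
  by (simp add: S_def)

lemma mu_eq: "mu \<xi> x \<omega> = enat n \<longleftrightarrow> (S \<xi> n \<omega> > x \<and> (\<forall>k<n. S \<xi> k \<omega> \<le> x))"
proof
  assume a: "mu \<xi> x \<omega> = enat n"
  then have ex: "\<exists>n. S \<xi> n \<omega> > x" by (auto simp: mu_def split: if_splits)
  with a have n: "n = (LEAST n. S \<xi> n \<omega> > x)" by (simp add: mu_def)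
  show "S \<xi> n \<omega> > x \<and> (\<forall>k<n. S \<xi> k \<omega> \<le> x)"
    using LeastI_ex[OF ex] not_less_Least n by (metis not_le)
next
  assume b: "S \<xi> n \<omega> > x \<and> (\<forall>k<n. S \<xi> k \<omega> \<le> x)"
  then have "(LEAST n. S \<xi> n \<omega> > x) = n"
    by (intro Least_equality) (auto simp: not_less[symmetric])
  then show "mu \<xi> x \<omega> = enat n" using b by (auto simp: mu_def)
qed

lemma Msig_gt: "Msig \<xi> \<sigma> \<omega> > ereal x \<longleftrightarrow> (\<exists>n. mu \<xi> x \<omega> = enat n \<and> enat n \<le> \<sigma> \<omega>)"
proof
  assume "Msig \<xi> \<sigma> \<omega> > ereal x"
  then obtain i where i: "enat i \<le> \<sigma> \<omega>" "x < S \<xi> i \<omega>"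
    unfolding Msig_def by (auto simp: less_SUP_iff)
  define n where "n = (LEAST n. S \<xi> n \<omega> > x)"
  have ex: "\<exists>n. S \<xi> n \<omega> > x" using i by blast
  have "n \<le> i" unfolding n_def using i by (intro Least_le) auto
  then have "enat n \<le> \<sigma> \<omega>" using i(1) by (meson enat_ord_simps(1) order_trans)
  moreover have "mu \<xi> x \<omega> = enat n" using ex by (simp add: mu_def n_def)
  ultimately show "\<exists>n. mu \<xi> x \<omega> = enat n \<and> enat n \<le> \<sigma> \<omega>" by blast
next
  assume "\<exists>n. mu \<xi> x \<omega> = enat n \<and> enat n \<le> \<sigma> \<omega>"
  then obtain n where "mu \<xi> x \<omega> = enat n" "enat n \<le> \<sigma> \<omega>" by blast
  then show "Msig \<xi> \<sigma> \<omega> > ereal x" unfolding Msig_def mu_eq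
    by (auto simp: less_SUP_iff)
qed


locale LT = prob_space M for M :: "'a measure" +
  fixes \<xi> :: "nat \<Rightarrow> 'a \<Rightarrow> real" and F :: "nat \<Rightarrow> 'a measure" and \<sigma> :: "'a \<Rightarrow> enat"
    and h :: "real \<Rightarrow> real"
  assumes ident: "\<And>n. n \<ge> 1 \<Longrightarrow> distr M borel (\<xi> n) = distr M borel (\<xi> 1)"
    and filt_sub: "\<And>n. subalgebra M (F n)"
    and filt_mono: "\<And>n k. n \<le> k \<Longrightarrow> sets (F n) \<subseteq> sets (F k)"
    and adapted: "\<And>n. n \<ge> 1 \<Longrightarrow> \<xi> n \<in> borel_measurable (F n)"
    and indep_next: "\<And>n. indep_set (sets (F n)) (sets (vimage_algebra (space M) (\<xi> (Suc n)) borel))"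
    and stopping: "\<And>n. Measurable.pred (F n) (\<lambda>\<omega>. \<sigma> \<omega> \<le> enat n)"
    and Esigma_fin: "(\<integral>\<^sup>+\<omega>. ennreal_of_enat (\<sigma> \<omega>) \<partial>M) < \<infinity>"
    and tail_pos: "\<And>x. Fbar M \<xi> x > 0"
    and long_tailed: "\<And>c. c > 0 \<Longrightarrow> ((\<lambda>x. Fbar M \<xi> (x - c) / Fbar M \<xi> x) \<longlongrightarrow> 1) at_top"
    and h1: "\<And>x. x \<ge> 0 \<Longrightarrow> h x \<le> x / 2"
    and h2: "filterlim h at_top at_top"
    and h3: "((\<lambda>x. Fbar M \<xi> (x - h x) / Fbar M \<xi> x) \<longlongrightarrow> 1) at_top"
begin

lemma spaceF[simp]: "space (F n) = space M"
  using filt_sub[of n] unfolding subalgebra_def by auto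

lemma setsF: "A \<in> sets (F n) \<Longrightarrow> A \<in> sets M"
  using filt_sub[of n] unfolding subalgebra_def by auto

lemma xi_meas_F: "1 \<le> i \<Longrightarrow> i \<le> k \<Longrightarrow> \<xi> i \<in> borel_measurable (F k)"
proof -
  assume "1 \<le> i" "i \<le> k"
  have "subalgebra (F k) (F i)" using filt_mono[OF \<open>i \<le> k\<close>] by (simp add: subalgebra_def)
  then show ?thesis using measurable_from_subalg adapted[OF \<open>1 \<le> i\<close>] by blast
qed

lemma S_meas_F: "k \<le> n \<Longrightarrow> S \<xi> k \<in> borel_measurable (F n)"
proof -
  assume "k \<le> n"
  have "(\<lambda>\<omega>. \<Sum>i\<in>{1..k}. \<xi> i \<omega>) \<in> borel_measurable (F n)"
    by (rule borel_measurable_sum) (use xi_meas_F \<open>k \<le> n\<close> in auto)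
  then show ?thesis unfolding S_def[abs_def] by simp
qed

lemma S_meas[measurable]: "S \<xi> k \<in> borel_measurable M"
  using measurable_from_subalg[OF filt_sub S_meas_F[OF order_refl]] by blast

lemma xi_meas[measurable]: "\<xi> (Suc n) \<in> borel_measurable M"
  using measurable_from_subalg[OF filt_sub adapted] by auto

lemma Le_F: "{\<omega>\<in>space M. \<sigma> \<omega> \<le> enat n} \<in> sets (F n)"
  using stopping[of n] by (simp add: pred_def)

lemma Le_M: "{\<omega>\<in>space M. \<sigma> \<omega> \<le> enat n} \<in> sets M"
  using setsF[OF Le_F] .

lemma Gt_F: "{\<omega>\<in>space M. \<not> \<sigma> \<omega> \<le> enat n} \<in> sets (F n)"
proof -
  have "{\<omega>\<in>space M. \<not> \<sigma> \<omega> \<le> enat n} = space (F n) - {\<omega>\<in>space M. \<sigma> \<omega> \<le> enat n}" by auto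
  then show ?thesis using Le_F by (metis sets.compl_sets)
qed

lemma sigma_meas[measurable]: "\<sigma> \<in> measurable M (count_space UNIV)"
proof (subst measurable_count_space_eq2_countable, intro conjI ballI)
  fix a :: enat
  show "\<sigma> -` {a} \<inter> space M \<in> sets M"
  proof (cases a)
    case (enat n)
    show ?thesis
    proof (cases n)
      case 0
      have "\<sigma> -` {a} \<inter> space M = {\<omega>\<in>space M. \<sigma> \<omega> \<le> enat 0}" using enat 0 by (auto simp: enat_0)
      then show ?thesis using Le_M by simp
    next
      case (Suc k)
      have "\<sigma> -` {a} \<inter> space M = {\<omega>\<in>space M. \<sigma> \<omega> \<le> enat n} - {\<omega>\<in>space M. \<sigma> \<omega> \<le> enat k}"
        apply (rule set_eqI) apply (case_tac "\<sigma> x") using enat Suc by auto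
      then show ?thesis using Le_M by auto
    qed
  next
    case infinity
    have "\<sigma> -` {a} \<inter> space M = space M - (\<Union>n. {\<omega>\<in>space M. \<sigma> \<omega> \<le> enat n})"
      using infinity apply auto apply (case_tac "\<sigma> x") by auto
    then show ?thesis using Le_M by auto
  qed
qed auto


end

context LT begin
lemma sigma_ge_pred[measurable]: "Measurable.pred M (\<lambda>\<omega>. enat n \<le> \<sigma> \<omega>)"
  using measurable_compose[OF sigma_meas, of "\<lambda>e. enat n \<le> e" "count_space UNIV"]
  by (simp add: measurable_count_space)

lemma Fbar_eq: "Fbar M \<xi> c = prob {\<omega>\<in>space M. \<xi> (Suc n) \<omega> > c}"
proof -
  have "Fbar M \<xi> c = 1 - measure (distr M borel (\<xi> (Suc n))) {..c}"
    using ident[of "Suc n"] by (simp add: Fbar_def cdf_def)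
  also have "measure (distr M borel (\<xi> (Suc n))) {..c} = prob (\<xi> (Suc n) -` {..c} \<inter> space M)"
    by (rule measure_distr) auto
  also have "\<xi> (Suc n) -` {..c} \<inter> space M = space M - {\<omega>\<in>space M. \<xi> (Suc n) \<omega> > c}" by auto
  also have "prob (space M - {\<omega>\<in>space M. \<xi> (Suc n) \<omega> > c}) = 1 - prob {\<omega>\<in>space M. \<xi> (Suc n) \<omega> > c}"
    by (rule prob_compl) measurable
  finally show ?thesis by simp
qed

lemma indep_T: "E \<in> sets (F n) \<Longrightarrow>
  prob (E \<inter> {\<omega>\<in>space M. \<xi> (Suc n) \<omega> > c}) = prob E * Fbar M \<xi> c"
proof -
  assume E: "E \<in> sets (F n)"
  have T: "{\<omega>\<in>space M. \<xi> (Suc n) \<omega> > c} = \<xi> (Suc n) -` {c<..} \<inter> space M" by auto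
  have inV: "{\<omega>\<in>space M. \<xi> (Suc n) \<omega> > c} \<in> sets (vimage_algebra (space M) (\<xi> (Suc n)) borel)"
    unfolding T by (rule in_vimage_algebra) auto
  show ?thesis unfolding Fbar_eq[of c n] by (rule indep_setD[OF indep_next E inV])
qed

definition Gt where "Gt n = {\<omega>\<in>space M. \<not> \<sigma> \<omega> \<le> enat n}"

definition L where "L = enn2real (\<integral>\<^sup>+\<omega>. ennreal_of_enat (\<sigma> \<omega>) \<partial>M)"

lemma Gt_F': "Gt n \<in> sets (F n)" using Gt_F by (simp add: Gt_def)
lemma Gt_M: "Gt n \<in> sets M" using setsF[OF Gt_F'] .

lemma sums_L: "(\<lambda>n. prob (Gt n)) sums L"
proof -
  have "(\<integral>\<^sup>+\<omega>. ennreal_of_enat (\<sigma> \<omega>) \<partial>M) = (\<Sum>t. emeasure M {x\<in>space M. enat t < \<sigma> x})"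
    by (rule nn_integral_enat_function) (rule sigma_meas)
  also have "\<dots> = (\<Sum>t. ennreal (prob (Gt t)))" by (simp add: Gt_def emeasure_eq_measure not_le)
  finally have eq: "(\<integral>\<^sup>+\<omega>. ennreal_of_enat (\<sigma> \<omega>) \<partial>M) = (\<Sum>t. ennreal (prob (Gt t)))" .
  have nt: "(\<Sum>t. ennreal (prob (Gt t))) \<noteq> top" using eq Esigma_fin by simp
  have summ: "summable (\<lambda>t. prob (Gt t))"
    by (rule summable_suminf_not_top) (use nt in auto)
  have e2: "(\<integral>\<^sup>+\<omega>. ennreal_of_enat (\<sigma> \<omega>) \<partial>M) = ennreal (\<Sum>t. prob (Gt t))"
    by (rule trans[OF eq suminf_ennreal2[of "\<lambda>t. prob (Gt t)", OF measure_nonneg summ]])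
  have "L = (\<Sum>t. prob (Gt t))"
    unfolding L_def e2 by (rule enn2real_ennreal[OF suminf_nonneg[OF summ measure_nonneg]])
  then show ?thesis using summ by (simp add: summable_sums)
qed

definition A1 where
  "A1 x = {\<omega>\<in>space M. \<exists>n. mu \<xi> x \<omega> = enat n \<and> enat n \<le> \<sigma> \<omega> \<and> S \<xi> (n - 1) \<omega> \<le> h x}"

lemma A1_sets: "A1 x \<in> sets M"
proof -
  have "A1 x = (\<Union>n. {\<omega>\<in>space M. S \<xi> n \<omega> > x \<and> (\<forall>k<n. S \<xi> k \<omega> \<le> x) \<and> enat n \<le> \<sigma> \<omega> \<and> S \<xi> (n - 1) \<omega> \<le> h x})"
    by (auto simp: A1_def mu_eq)
  also have "\<dots> \<in> sets M" by measurable
  finally show ?thesis .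
qed

lemma A2_sets: "A2 M \<xi> h \<sigma> x \<in> sets M"
proof -
  have "A2 M \<xi> h \<sigma> x = (\<Union>n. {\<omega>\<in>space M. S \<xi> n \<omega> > x \<and> (\<forall>k<n. S \<xi> k \<omega> \<le> x) \<and> enat n \<le> \<sigma> \<omega> \<and> S \<xi> (n - 1) \<omega> > h x})"
    by (auto simp: A2_def mu_eq)
  also have "\<dots> \<in> sets M" by measurable
  finally show ?thesis .
qed

lemma decomp: "{\<omega>\<in>space M. Msig \<xi> \<sigma> \<omega> > ereal x} = A1 x \<union> A2 M \<xi> h \<sigma> x"
proof (rule set_eqI)
  fix \<omega>
  show "\<omega> \<in> {\<omega>\<in>space M. Msig \<xi> \<sigma> \<omega> > ereal x} \<longleftrightarrow> \<omega> \<in> A1 x \<union> A2 M \<xi> h \<sigma> x"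
    unfolding Msig_gt A1_def A2_def mem_Collect_eq Un_iff
    by (meson not_le)
qed

lemma decomp_disj: "A1 x \<inter> A2 M \<xi> h \<sigma> x = {}"
  unfolding A1_def A2_def by auto

lemma measure_decomp: "measure M {\<omega>\<in>space M. Msig \<xi> \<sigma> \<omega> > ereal x} = measure M (A1 x) + measure M (A2 M \<xi> h \<sigma> x)"
  unfolding decomp by (rule finite_measure_Union[OF A1_sets A2_sets decomp_disj])

lemma upper: assumes x: "x \<ge> 0" shows "measure M (A1 x) \<le> L * Fbar M \<xi> (x - h x)"
proof -
  define c where "c = x - h x"
  define B where "B n = Gt n \<inter> {\<omega>\<in>space M. \<xi> (Suc n) \<omega> > c}" for n
  have Bp: "prob (B n) = prob (Gt n) * Fbar M \<xi> c" for n unfolding B_def using indep_T Gt_F' by simp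
  have Bs: "range B \<subseteq> sets M" unfolding B_def using Gt_M by auto
  have summ: "summable (\<lambda>n. prob (B n))" unfolding Bp by (intro summable_mult2 sums_summable[OF sums_L])
  have sub: "A1 x \<subseteq> (\<Union>n. B n)"
  proof
    fix \<omega> assume "\<omega> \<in> A1 x"
    then obtain N where N: "\<omega>\<in>space M" "S \<xi> N \<omega> > x" "\<forall>k<N. S \<xi> k \<omega> \<le> x" "enat N \<le> \<sigma> \<omega>" "S \<xi> (N - 1) \<omega> \<le> h x"
      by (auto simp: A1_def mu_eq)
    have "N \<noteq> 0" using N(2) x by (cases N) auto
    then obtain n where n: "N = Suc n" by (cases N) auto
    have "\<not> \<sigma> \<omega> \<le> enat n"
    proof
      assume "\<sigma> \<omega> \<le> enat n"
      with N(4) n have "enat (Suc n) \<le> enat n" by (meson order_trans)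
      then show False by simp
    qed
    moreover have "\<xi> (Suc n) \<omega> > c" using N(2,5) n S_Suc[of \<xi> n \<omega>] by (simp add: c_def)
    ultimately have "\<omega> \<in> B n" using N(1) by (simp add: B_def Gt_def)
    then show "\<omega> \<in> (\<Union>n. B n)" by blast
  qed
  have "measure M (A1 x) \<le> measure M (\<Union>n. B n)" by (rule finite_measure_mono[OF sub]) (use Bs in auto)
  also have "\<dots> \<le> (\<Sum>n. prob (B n))" by (rule finite_measure_subadditive_countably[OF Bs summ])
  also have "\<dots> = L * Fbar M \<xi> c" unfolding Bp
    using sums_unique[OF sums_L] suminf_mult2[OF sums_summable[OF sums_L]] by simp
  finally show ?thesis by (simp add: c_def)
qed

lemma upset_le: "k \<le> n \<Longrightarrow> {\<omega>\<in>space M. S \<xi> k \<omega> \<le> a} \<in> sets (F n)"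
  using S_meas_F[of k n] unfolding borel_measurable_iff_le by simp

lemma upset_gt: "k \<le> n \<Longrightarrow> {\<omega>\<in>space M. a < S \<xi> k \<omega>} \<in> sets (F n)"
  using S_meas_F[of k n] unfolding borel_measurable_iff_greater by simp

lemma lower:
  assumes x: "x \<ge> 0" "h x \<le> x"
  shows "Fbar M \<xi> (x + A) * (\<Sum>n<N. prob (Gt n) - prob {\<omega>\<in>space M. S \<xi> n \<omega> \<le> -A}
            - (\<Sum>k\<le>n. prob {\<omega>\<in>space M. S \<xi> k \<omega> > h x})) \<le> measure M (A1 x)"
proof -
  define G where "G n = Gt n \<inter> (\<Inter>k\<in>{..n}. {\<omega>\<in>space M. S \<xi> k \<omega> \<le> h x}) \<inter> {\<omega>\<in>space M. S \<xi> n \<omega> > -A}" for n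
  define D where "D n = G n \<inter> {\<omega>\<in>space M. \<xi> (Suc n) \<omega> > x + A}" for n
  have GF: "G n \<in> sets (F n)" for n
  proof -
    have "(\<Inter>k\<in>{..n}. {\<omega>\<in>space M. S \<xi> k \<omega> \<le> h x}) \<in> sets (F n)"
      by (rule sets.finite_INT) (auto intro: upset_le)
    then show ?thesis unfolding G_def using Gt_F' upset_gt[of n n "-A"] by auto
  qed
  have GM: "G n \<in> sets M" for n using setsF[OF GF] .
  have Dp: "prob (D n) = prob (G n) * Fbar M \<xi> (x + A)" for n using indep_T[OF GF] by (simp add: D_def)
  have Ds: "D n \<in> sets M" for n using GM unfolding D_def by measurable
  have Dsub: "D n \<subseteq> A1 x" for n
  proof
    fix \<omega> assume \<omega>: "\<omega> \<in> D n"
    have Sle: "S \<xi> k \<omega> \<le> h x" if "k \<le> n" for k using \<omega> that by (auto simp: D_def G_def)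
    have "S \<xi> (Suc n) \<omega> > x" using \<omega> S_Suc[of \<xi> n \<omega>] by (auto simp: D_def G_def)
    moreover have "\<forall>k<Suc n. S \<xi> k \<omega> \<le> x" using Sle x(2) by (meson less_Suc_eq_le order_trans)
    ultimately have mu: "mu \<xi> x \<omega> = enat (Suc n)" by (simp add: mu_eq)
    have "\<not> \<sigma> \<omega> \<le> enat n" using \<omega> by (auto simp: D_def G_def Gt_def)
    then have "enat (Suc n) \<le> \<sigma> \<omega>" by (cases "\<sigma> \<omega>") auto
    then show "\<omega> \<in> A1 x" using mu Sle[of n] \<omega> by (auto simp: A1_def D_def G_def)
  qed
  have key: "D n \<inter> D m = {}" if "n < m" for n m
  proof (rule ccontr)
    assume "D n \<inter> D m \<noteq> {}"
    then obtain \<omega> where \<omega>: "\<omega> \<in> D n" "\<omega> \<in> D m" by blast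
    have "S \<xi> (Suc n) \<omega> > x" using \<omega>(1) S_Suc[of \<xi> n \<omega>] by (auto simp: D_def G_def)
    moreover have "S \<xi> (Suc n) \<omega> \<le> h x" using \<omega>(2) that by (auto simp: D_def G_def)
    ultimately show False using x(2) by simp
  qed
  have disj: "disjoint_family_on D {..<N}"
    unfolding disjoint_family_on_def
    by (metis key inf_commute linorder_neqE_nat)
  have "(\<Sum>n<N. prob (D n)) = measure M (\<Union>n\<in>{..<N}. D n)"
    by (rule finite_measure_finite_Union[symmetric]) (use Ds disj in auto)
  also have "\<dots> \<le> measure M (A1 x)" by (rule finite_measure_mono) (use Dsub A1_sets in auto)
  finally have 1: "(\<Sum>n<N. prob (D n)) \<le> measure M (A1 x)" .
  have Gb: "prob (Gt n) - prob {\<omega>\<in>space M. S \<xi> n \<omega> \<le> -A} - (\<Sum>k\<le>n. prob {\<omega>\<in>space M. S \<xi> k \<omega> > h x}) \<le> prob (G n)" for n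
  proof -
    let ?X = "{\<omega>\<in>space M. S \<xi> n \<omega> \<le> -A}"
    let ?Y = "(\<Union>k\<in>{..n}. {\<omega>\<in>space M. S \<xi> k \<omega> > h x})"
    have XM: "?X \<in> sets M" by measurable
    have YM: "?Y \<in> sets M" by measurable
    have "Gt n \<subseteq> G n \<union> ?X \<union> ?Y" unfolding G_def Gt_def by (auto simp: not_less not_le)
    then have "prob (Gt n) \<le> prob (G n \<union> ?X \<union> ?Y)"
      by (intro finite_measure_mono) (use GM XM YM in auto)
    also have "\<dots> \<le> prob (G n \<union> ?X) + prob ?Y"
      by (intro measure_subadditive emeasure_finite) (use GM XM YM in auto)
    also have "prob (G n \<union> ?X) \<le> prob (G n) + prob ?X"
      by (intro measure_subadditive emeasure_finite) (use GM XM YM in auto)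
    also have "prob ?Y \<le> (\<Sum>k\<le>n. prob {\<omega>\<in>space M. S \<xi> k \<omega> > h x})"
      by (rule finite_measure_subadditive_finite) auto
    finally show ?thesis by simp
  qed
  have Fp: "Fbar M \<xi> (x + A) \<ge> 0" using tail_pos[of "x + A"] by simp
  have "Fbar M \<xi> (x + A) * (\<Sum>n<N. prob (Gt n) - prob {\<omega>\<in>space M. S \<xi> n \<omega> \<le> -A}
            - (\<Sum>k\<le>n. prob {\<omega>\<in>space M. S \<xi> k \<omega> > h x})) \<le> Fbar M \<xi> (x + A) * (\<Sum>n<N. prob (G n))"
    by (intro mult_left_mono sum_mono Gb Fp)
  also have "\<dots> = (\<Sum>n<N. prob (D n))" by (simp add: Dp sum_distrib_left mult.commute)
  finally show ?thesis using 1 by simp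
qed

lemma tail_S: "((\<lambda>y. prob {\<omega>\<in>space M. S \<xi> k \<omega> > y}) \<longlongrightarrow> 0) at_top"
proof -
  interpret D: real_distribution "distr M borel (S \<xi> k)" by (rule real_distribution_distr) simp
  have eq: "prob {\<omega>\<in>space M. S \<xi> k \<omega> > y} = 1 - cdf (distr M borel (S \<xi> k)) y" for y
  proof -
    have "cdf (distr M borel (S \<xi> k)) y = prob (S \<xi> k -` {..y} \<inter> space M)"
      unfolding cdf_def2 by (rule measure_distr) auto
    also have "S \<xi> k -` {..y} \<inter> space M = space M - {\<omega>\<in>space M. S \<xi> k \<omega> > y}" by auto
    also have "prob (space M - {\<omega>\<in>space M. S \<xi> k \<omega> > y}) = 1 - prob {\<omega>\<in>space M. S \<xi> k \<omega> > y}"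
      by (rule prob_compl) measurable
    finally show ?thesis by simp
  qed
  show ?thesis unfolding eq using tendsto_diff[OF tendsto_const D.cdf_lim_at_top_prob, of 1] by simp
qed

lemma tail_S_neg: "((\<lambda>A. prob {\<omega>\<in>space M. S \<xi> k \<omega> \<le> -A}) \<longlongrightarrow> 0) at_top"
proof -
  interpret D: real_distribution "distr M borel (S \<xi> k)" by (rule real_distribution_distr) simp
  have eq: "prob {\<omega>\<in>space M. S \<xi> k \<omega> \<le> -A} = cdf (distr M borel (S \<xi> k)) (-A)" for A
  proof -
    have "cdf (distr M borel (S \<xi> k)) (-A) = prob (S \<xi> k -` {..-A} \<inter> space M)"
      unfolding cdf_def2 by (rule measure_distr) auto
    also have "S \<xi> k -` {..-A} \<inter> space M = {\<omega>\<in>space M. S \<xi> k \<omega> \<le> -A}" by auto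
    finally show ?thesis by simp
  qed
  show ?thesis unfolding eq
    by (rule filterlim_compose[OF D.cdf_lim_at_bot filterlim_uminus_at_bot_at_top])
qed

lemma a1_lim: "((\<lambda>x. measure M (A1 x) / Fbar M \<xi> x) \<longlongrightarrow> L) at_top"
proof (rule order_tendstoI)
  fix a assume a: "L < a"
  have "((\<lambda>x. L * (Fbar M \<xi> (x - h x) / Fbar M \<xi> x)) \<longlongrightarrow> L * 1) at_top"
    by (intro tendsto_mult tendsto_const h3)
  then have ev: "eventually (\<lambda>x. L * (Fbar M \<xi> (x - h x) / Fbar M \<xi> x) < a) at_top"
    using a by (intro order_tendstoD(2)) auto
  show "eventually (\<lambda>x. measure M (A1 x) / Fbar M \<xi> x < a) at_top"
    using ev eventually_ge_at_top[of "0::real"]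
  proof eventually_elim
    case (elim x)
    have "measure M (A1 x) / Fbar M \<xi> x \<le> (L * Fbar M \<xi> (x - h x)) / Fbar M \<xi> x"
      by (intro divide_right_mono upper elim(2)) (use tail_pos[of x] in simp)
    then show ?case using elim(1) by simp
  qed
next
  fix a assume a: "a < L"
  define d where "d = L - a"
  have d: "d > 0" using a by (simp add: d_def)
  have "eventually (\<lambda>N. (\<Sum>n<N. prob (Gt n)) > L - d/3) sequentially"
    using sums_L[unfolded sums_def] by (rule order_tendstoD(1)) (use d in simp)
  then obtain N where N: "(\<Sum>n<N. prob (Gt n)) > L - d/3" by (auto simp: eventually_sequentially)
  define g where "g A = (\<Sum>n<N. prob {\<omega>\<in>space M. S \<xi> n \<omega> \<le> -A})" for A
  have "(g \<longlongrightarrow> (\<Sum>n<N. 0)) at_top" unfolding g_def[abs_def] by (intro tendsto_sum tail_S_neg)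
  then have "eventually (\<lambda>A. g A < d/3) at_top" using d by (intro order_tendstoD(2)) auto
  then have "eventually (\<lambda>A. g A < d/3 \<and> A > 0) at_top" by (intro eventually_conj eventually_gt_at_top)
  then obtain A where A: "g A < d/3" "A > 0" by (auto simp: eventually_at_top_linorder)
  define u where "u x = (\<Sum>n<N. \<Sum>k\<le>n. prob {\<omega>\<in>space M. S \<xi> k \<omega> > h x})" for x
  have u: "(u \<longlongrightarrow> 0) at_top"
  proof -
    have "(u \<longlongrightarrow> (\<Sum>n<N. \<Sum>k\<le>n. 0)) at_top" unfolding u_def[abs_def]
      by (intro tendsto_sum filterlim_compose[OF tail_S h2])
    then show ?thesis by simp
  qed
  have r: "((\<lambda>x. Fbar M \<xi> (x + A) / Fbar M \<xi> x) \<longlongrightarrow> 1) at_top"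
  proof -
    have f: "filterlim (\<lambda>x::real. x + A) at_top at_top"
      using filterlim_tendsto_add_at_top[OF tendsto_const[of A] filterlim_ident]
      by (simp add: add.commute)
    have lim: "((\<lambda>x. Fbar M \<xi> (x + A - A) / Fbar M \<xi> (x + A)) \<longlongrightarrow> 1) at_top"
      by (rule filterlim_compose[OF long_tailed[OF A(2)] f])
    then have "((\<lambda>x. inverse (Fbar M \<xi> x / Fbar M \<xi> (x + A))) \<longlongrightarrow> inverse 1) at_top"
      by (intro tendsto_inverse) simp_all
    then show ?thesis by simp
  qed
  define c where "c = (\<Sum>n<N. prob (Gt n)) - g A"
  have c: "c > a + d/3" using N A(1) d_def unfolding c_def by linarith
  have "((\<lambda>x. Fbar M \<xi> (x + A) / Fbar M \<xi> x * (c - u x)) \<longlongrightarrow> 1 * (c - 0)) at_top"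
    by (intro tendsto_mult tendsto_diff tendsto_const r u)
  then have ev: "eventually (\<lambda>x. a < Fbar M \<xi> (x + A) / Fbar M \<xi> x * (c - u x)) at_top"
    using c d by (intro order_tendstoD(1)) auto
  show "eventually (\<lambda>x. a < measure M (A1 x) / Fbar M \<xi> x) at_top"
    using ev eventually_ge_at_top[of "0::real"]
  proof eventually_elim
    case (elim x)
    have hx: "h x \<le> x" using h1[OF elim(2)] elim(2) by simp
    have eqs: "(\<Sum>n<N. prob (Gt n) - prob {\<omega>\<in>space M. S \<xi> n \<omega> \<le> -A}
            - (\<Sum>k\<le>n. prob {\<omega>\<in>space M. S \<xi> k \<omega> > h x})) = c - u x"
      by (simp add: c_def g_def u_def sum_subtractf)
    have "Fbar M \<xi> (x + A) * (c - u x) \<le> measure M (A1 x)" using lower[OF elim(2) hx, of A N] eqs by simp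
    then have "Fbar M \<xi> (x + A) * (c - u x) / Fbar M \<xi> x \<le> measure M (A1 x) / Fbar M \<xi> x"
      by (rule divide_right_mono) (use tail_pos[of x] in simp)
    then show ?case using elim(1) by simp
  qed
qed

end

theorem lemma5:
  fixes M :: "'a measure" and \<xi> :: "nat \<Rightarrow> 'a \<Rightarrow> real" and m :: real
    and F :: "nat \<Rightarrow> 'a measure" and \<sigma> :: "'a \<Rightarrow> enat" and h :: "real \<Rightarrow> real"
  assumes P: "prob_space M"
    and rv: "\<And>n. n \<ge> 1 \<Longrightarrow> \<xi> n \<in> borel_measurable M"
    and indep: "prob_space.indep_vars M (\<lambda>_. borel) \<xi> {1..}"
    and ident: "\<And>n. n \<ge> 1 \<Longrightarrow> distr M borel (\<xi> n) = distr M borel (\<xi> 1)"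
    and integ: "integrable M (\<xi> 1)"
    and mean: "prob_space.expectation M (\<xi> 1) = - m"
    and m_pos: "m > 0"
    and tail_pos: "\<And>x. Fbar M \<xi> x > 0"
    and long_tailed: "\<And>c. c > 0 \<Longrightarrow> ((\<lambda>x. Fbar M \<xi> (x - c) / Fbar M \<xi> x) \<longlongrightarrow> 1) at_top"
    and filt_sub: "\<And>n. subalgebra M (F n)"
    and filt_mono: "\<And>n k. n \<le> k \<Longrightarrow> sets (F n) \<subseteq> sets (F k)"
    and adapted: "\<And>n. n \<ge> 1 \<Longrightarrow> \<xi> n \<in> borel_measurable (F n)"
    and indep_next: "\<And>n. prob_space.indep_set M (sets (F n))
                          (sets (vimage_algebra (space M) (\<xi> (Suc n)) borel))"
    and stopping: "\<And>n. Measurable.pred (F n) (\<lambda>\<omega>. \<sigma> \<omega> \<le> enat n)"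
    and Esigma_fin: "(\<integral>\<^sup>+\<omega>. ennreal_of_enat (\<sigma> \<omega>) \<partial>M) < \<infinity>"
    and h_nonneg: "\<And>x. x \<ge> 0 \<Longrightarrow> h x \<ge> 0"
    and h1: "\<And>x. x \<ge> 0 \<Longrightarrow> h x \<le> x / 2"
    and h2: "filterlim h at_top at_top"
    and h3: "((\<lambda>x. Fbar M \<xi> (x - h x) / Fbar M \<xi> x) \<longlongrightarrow> 1) at_top"
    and h4: "\<exists>x0\<ge>0. \<forall>x\<ge>x0. \<forall>t\<ge>0. h (x + t) \<le> h x + t"
  shows "((delta M \<xi> h \<sigma> \<longlongrightarrow> 0) at_top) \<longleftrightarrow>
         ((\<lambda>x. measure M {\<omega>\<in>space M. Msig \<xi> \<sigma> \<omega> > ereal x} / Fbar M \<xi> x)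
            \<longlongrightarrow> enn2real (\<integral>\<^sup>+\<omega>. ennreal_of_enat (\<sigma> \<omega>) \<partial>M)) at_top"
proof -
  have LTi: "LT M \<xi> F \<sigma> h"
  proof (rule LT.intro[OF P], rule LT_axioms.intro)
  qed (fact+)
  interpret LT M \<xi> F \<sigma> h by (rule LTi)
  define a1 where "a1 x = measure M (A1 x) / Fbar M \<xi> x" for x
  define a2 where "a2 x = measure M (A2 M \<xi> h \<sigma> x) / Fbar M \<xi> x" for x
  define R where "R = (\<lambda>x. measure M {\<omega>\<in>space M. Msig \<xi> \<sigma> \<omega> > ereal x} / Fbar M \<xi> x)"
  have RA: "R = (\<lambda>x. a1 x + a2 x)"
    unfolding R_def a1_def a2_def measure_decomp by (simp add: add_divide_distrib)
  have a1: "(a1 \<longlongrightarrow> L) at_top" unfolding a1_def[abs_def] by (rule a1_lim)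
  have a2nn: "a2 x \<ge> 0" for x using tail_pos[of x] by (simp add: a2_def)
  have eq1: "(R \<longlongrightarrow> L) at_top \<longleftrightarrow> (a2 \<longlongrightarrow> 0) at_top"
  proof
    assume "(R \<longlongrightarrow> L) at_top"
    then have "((\<lambda>x. R x - a1 x) \<longlongrightarrow> L - L) at_top" using a1 by (intro tendsto_diff)
    then show "(a2 \<longlongrightarrow> 0) at_top" by (simp add: RA)
  next
    assume "(a2 \<longlongrightarrow> 0) at_top"
    then have "((\<lambda>x. a1 x + a2 x) \<longlongrightarrow> L + 0) at_top" using a1 by (intro tendsto_add)
    then show "(R \<longlongrightarrow> L) at_top" by (simp add: RA)
  qed
  have delta_eq: "delta M \<xi> h \<sigma> x = (SUP y\<in>{x..}. ereal (a2 y))" for x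
    unfolding delta_def a2_def by simp
  have eq2: "(delta M \<xi> h \<sigma> \<longlongrightarrow> 0) at_top \<longleftrightarrow> (a2 \<longlongrightarrow> 0) at_top"
  proof
    assume dl: "(delta M \<xi> h \<sigma> \<longlongrightarrow> 0) at_top"
    show "(a2 \<longlongrightarrow> 0) at_top"
    proof (rule order_tendstoI)
      fix e :: real assume "e < 0"
      then show "eventually (\<lambda>x. e < a2 x) at_top"
        using a2nn by (intro always_eventually allI) (meson less_le_trans)
    next
      fix e :: real assume e: "0 < e"
      have "eventually (\<lambda>x. delta M \<xi> h \<sigma> x < ereal e) at_top"
        using dl e by (intro order_tendstoD(2)) auto
      then show "eventually (\<lambda>x. a2 x < e) at_top"
      proof eventually_elim
        case (elim x)
        have "ereal (a2 x) \<le> delta M \<xi> h \<sigma> x" unfolding delta_eq by (rule SUP_upper) auto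
        then have "ereal (a2 x) < ereal e" using elim by (rule le_less_trans)
        then show ?case by simp
      qed
    qed
  next
    assume al: "(a2 \<longlongrightarrow> 0) at_top"
    show "(delta M \<xi> h \<sigma> \<longlongrightarrow> 0) at_top"
    proof (rule order_tendstoI)
      fix e :: ereal assume e: "e < 0"
      have "0 \<le> delta M \<xi> h \<sigma> x" for x
      proof -
        have "ereal (a2 x) \<le> delta M \<xi> h \<sigma> x" unfolding delta_eq by (rule SUP_upper) auto
        then show ?thesis using a2nn[of x] by (meson ereal_less_eq(5) order_trans)
      qed
      then show "eventually (\<lambda>x. e < delta M \<xi> h \<sigma> x) at_top"
        using e by (intro always_eventually allI) (meson less_le_trans)
    next
      fix e :: ereal assume e: "0 < e"
      obtain r :: real where r: "0 < r" "ereal r < e"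
      proof (cases e)
        case (real s)
        then show ?thesis using that[of "s/2"] e by simp
      next
        case PInf
        then show ?thesis using that[of 1] by simp
      next
        case MInf
        then show ?thesis using e by simp
      qed
      have "eventually (\<lambda>x. a2 x < r/2) at_top" using al r by (intro order_tendstoD(2)) auto
      then obtain X where X: "\<And>y. y \<ge> X \<Longrightarrow> a2 y < r/2" by (auto simp: eventually_at_top_linorder)
      show "eventually (\<lambda>x. delta M \<xi> h \<sigma> x < e) at_top"
        unfolding eventually_at_top_linorder
      proof (intro exI allI impI)
        fix x assume x: "X \<le> x"
        have "delta M \<xi> h \<sigma> x \<le> ereal (r/2)" unfolding delta_eq
          by (rule SUP_least) (use X x in \<open>auto intro: less_imp_le\<close>)
        also have "ereal (r/2) < ereal r" using r by simp
        also have "\<dots> < e" by (rule r(2))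
        finally show "delta M \<xi> h \<sigma> x < e" .
      qed
    qed
  qed
  show ?thesis using eq1 eq2 by (simp add: R_def L_def)
qed

end
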